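(* Consider the implicit scheme and the semi-implicit scheme of the ISPH method described in the context. Suppose that, for every $k=0,1,\dots,K-1$, the particle distribution $X^k=\{x^k_1,\dots,x^k_N\}$ (with its partition $\{1,\dots,N\}=\Lambda_F^k\cup\Lambda_S^k\cup\Lambda_W^k$) satisfies the $h$-connectivity condition. Then both the implicit scheme and the semi-implicit scheme have a unique solution, i.e. at every step $k=0,\dots,K-1$ the equations of the step uniquely determine $\tilde u^{k+1}$, $p^{k+1}$ and $u^{k+1}$.
   Context: Let $d\in\{2,3\}$, $\Omega\subset\mathbb{R}^d$ a bounded domain with smooth boundary, $|\Omega|$ its volume. Fix $\rho>0$ (density), $\nu>0$ (viscosity), $T>0$, a body force $f:\overline\Omega\times[0,T]\to\mathbb{R}^d$ and an initial velocity $u_0:\overline\Omega\to\mathbb{R}^d$. Let $\Delta t>0$, $K=\lfloor T/\Delta t\rfloor$, $t^k=k\Delta t$. Reference weight function: $w\in C^2([0,\infty))$ such that for some $r_0>0$: $w(r)>0$ for $0<r<r_0$, $w(r)=0$ for $r\ge r_0$; $\dot w(r)<0$ for $0<r<r_0$, $\dot w(r)=0$ for $r=0$ or $r\ge r_0$; and $\int_{\mathbb{R}^d}w(|x|)\,dx=1$. For a smoothing length $h>0$ put $w_h(r)=h^{-d}w(r/h)$ with derivative $\dot w_h$, and for $x\neq y$ write $\nabla w_h(|x-y|)=\dot w_h(|x-y|)\frac{x-y}{|x-y|}$ (gradient in $x$), with $\nabla w_h(0):=0$. Particles: $N\in\mathbb{N}$, particle volumes $V_1,\dots,V_N>0$ with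 $\sum_i V_i=|\Omega|$. At each time level $k$ there are pairwise distinct positions $x^k_1,\dots,x^k_N\in\overline\Omega$ with $r_0h>\min_{i\ne j}|x^k_i-x^k_j|$, and a partition of $I_N=\{1,\dots,N\}$ into disjoint sets $\Lambda^k_F$ (inner fluid particles), $\Lambda^k_S$ (free-surface particles), $\Lambda^k_W$ (wall particles). Set $f^k_i=f(x^k_i,t^k)$ for $i\in\Lambda_F^k\cup\Lambda_S^k$ and $f^k_i=0$ for $i\in\Lambda_W^k$. Positions are updated by $x^{k+1}_i=x^k_i+\Delta t\,u^{k+1}_i$. Discrete operators at level $k$ (all distances $|x^k_i-x^k_j|$, gradients $\nabla w_h(|x^k_i-x^k_j|)$): for vector data $v$, $(\Delta_h v)_i=2\sum_{j\ne i,\,j\in I_N}V_j\frac{v_i-v_j}{|x^k_i-x^k_j|}\frac{x^k_i-x^k_j}{|x^k_i-x^k_j|}\cdot\nabla w_h(|x^k_i-x^k_j|)$; $(\nabla_h\cdot v)_i=\sum_{j=1}^N V_j(v_j+v_i)\cdot\nabla w_h(|x^k_i-x^k_j|)$; for scalar $p$ defined on $\Lambda_F^k\cup\Lambda_S^k$, $(\nabla_h p)_i=\sum_{j\in\Lambda_F^k\cup\Lambda_S^k}V_j(p_j-p_i)\nabla w_h(|x^k_i-x^k_j|)$ and $(\Delta_h p)_i=2\sum_{j\in\Lambda_F^k\cup\Lambda_S^k\setminus\{i\}}V_j\frac{p_i-p_j}{|x^k_i-x^k_j|}\frac{x^k_i-x^k_j}{|x^k_i-x^k_j|}\cdot\nabla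 w_h(|x^k_i-x^k_j|)$. Implicit scheme: $u^0_i=u_0(x^0_i)$ ($i=1..N$), and for $k=0,\dots,K-1$ find $\tilde u^{k+1}\in(\mathbb{R}^d)^N$, $p^{k+1}\in\mathbb{R}^{\Lambda_F^k\cup\Lambda_S^k}$, $u^{k+1}\in(\mathbb{R}^d)^N$ with: (b) $\frac{\tilde u^{k+1}_i-u^k_i}{\Delta t}=\nu(\Delta_h\tilde u^{k+1})_i+f^k_i$ for $i\in\Lambda_F^k\cup\Lambda_S^k$, $\tilde u^{k+1}_i=0$ for $i\in\Lambda_W^k$; (c) $(\Delta_h p^{k+1})_i=\frac{\rho}{\Delta t}(\nabla_h\cdot\tilde u^{k+1})_i$ for $i\in\Lambda_F^k$, $p^{k+1}_i=0$ for $i\in\Lambda_S^k$; (d) $\frac{u^{k+1}_i-\tilde u^{k+1}_i}{\Delta t}=-\frac1\rho(\nabla_h p^{k+1})_i$ for $i\in\Lambda_F^k\cup\Lambda_S^k$, $u^{k+1}_i=0$ for $i\in\Lambda_W^k$. The semi-implicit scheme is identical except that (b) is replaced by $\frac{\tilde u^{k+1}_i-u^k_i}{\Delta t}=\nu(\Delta_h u^k)_i+f^k_i$ for $i\in\Lambda_F^k\cup\Lambda_S^k$, $\tilde u^{k+1}_i=0$ for $i\in\Lambda_W^k$. $h$-connectivity condition for $X^k$: for every $i\in\Lambda_F^k$ there exist finite sequences $i=i_1,i_2,\dots,i_\zeta$ and $i=i^*_1,\dots,i^*_{\zeta^*}$ in $I_N$ with $0<|x^k_{i_l}-x^k_{i_{l+1}}|<r_0h$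 and $i_l\in\Lambda_F^k$ for $1\le l<\zeta$, $i_\zeta\in\Lambda_S^k$; and $0<|x^k_{i^*_l}-x^k_{i^*_{l+1}}|<r_0h$ and $i^*_l\in\Lambda_F^k$ for $1\le l<\zeta^*$, $i^*_{\zeta^*}\in\Lambda_W^k$. *)

theory Defs
  imports "HOL-Analysis.Analysis"
begin

definition ref_weight :: "nat \<Rightarrow> (real \<Rightarrow> real) \<Rightarrow> (real \<Rightarrow> real) \<Rightarrow> real \<Rightarrow> bool" where
  "ref_weight d w wd r0 \<longleftrightarrow>
     r0 > 0 \<and>
     (\<exists>wdd. (\<forall>r\<ge>0. (w has_real_derivative wd r) (at r within {0..})) \<and>
            (\<forall>r\<ge>0. (wd has_real_derivative wdd r) (at r within {0..})) \<and>
            continuous_on {0..} wdd) \<and>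
     (\<forall>r. 0 < r \<and> r < r0 \<longrightarrow> w r > 0) \<and>
     (\<forall>r. r \<ge> r0 \<longrightarrow> w r = 0) \<and>
     (\<forall>r. 0 < r \<and> r < r0 \<longrightarrow> wd r < 0) \<and>
     wd 0 = 0 \<and> (\<forall>r. r \<ge> r0 \<longrightarrow> wd r = 0)"

text \<open>Derivative of the scaled kernel w_h(r) = h^(-d) w(r/h): d/dr w_h(r) = h^(-d-1) wd(r/h).\<close>
definition wh_dot :: "nat \<Rightarrow> (real \<Rightarrow> real) \<Rightarrow> real \<Rightarrow> real \<Rightarrow> real" where
  "wh_dot d wd h r = wd (r / h) / h ^ (d + 1)"

text \<open>grad w_h(|z|) for z = x - y; equal to 0 for z = 0.\<close>
definition grad_wh :: "nat \<Rightarrow> (real \<Rightarrow> real) \<Rightarrow> real \<Rightarrow> 'a::euclidean_space \<Rightarrow> 'a" where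
  "grad_wh d wd h z = (if z = 0 then 0 else (wh_dot d wd h (norm z) / norm z) *\<^sub>R z)"

definition lap_vec :: "nat \<Rightarrow> (real \<Rightarrow> real) \<Rightarrow> real \<Rightarrow> nat \<Rightarrow> (nat \<Rightarrow> real) \<Rightarrow> (nat \<Rightarrow> 'a::euclidean_space)
    \<Rightarrow> (nat \<Rightarrow> 'a) \<Rightarrow> nat \<Rightarrow> 'a" where
  "lap_vec d wd h N V x v i =
     2 *\<^sub>R (\<Sum>j\<in>{1..N} - {i}.
        (V j * ((1 / norm (x i - x j)) * (((1 / norm (x i - x j)) *\<^sub>R (x i - x j)) \<bullet> grad_wh d wd h (x i - x j))))
          *\<^sub>R (v i - v j))"

definition div_vec :: "nat \<Rightarrow> (real \<Rightarrow> real) \<Rightarrow> real \<Rightarrow> nat \<Rightarrow> (nat \<Rightarrow> real) \<Rightarrow> (nat \<Rightarrow> 'a::euclidean_space)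
    \<Rightarrow> (nat \<Rightarrow> 'a) \<Rightarrow> nat \<Rightarrow> real" where
  "div_vec d wd h N V x v i = (\<Sum>j\<in>{1..N}. V j * ((v j + v i) \<bullet> grad_wh d wd h (x i - x j)))"

text \<open>Scalar operators; P = Lambda_F \<union> Lambda_S.\<close>
definition grad_sc :: "nat \<Rightarrow> (real \<Rightarrow> real) \<Rightarrow> real \<Rightarrow> nat set \<Rightarrow> (nat \<Rightarrow> real) \<Rightarrow> (nat \<Rightarrow> 'a::euclidean_space)
    \<Rightarrow> (nat \<Rightarrow> real) \<Rightarrow> nat \<Rightarrow> 'a" where
  "grad_sc d wd h P V x p i = (\<Sum>j\<in>P. (V j * (p j - p i)) *\<^sub>R grad_wh d wd h (x i - x j))"

definition lap_sc :: "nat \<Rightarrow> (real \<Rightarrow> real) \<Rightarrow> real \<Rightarrow> nat set \<Rightarrow> (nat \<Rightarrow> real) \<Rightarrow> (nat \<Rightarrow> 'a::euclidean_space)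
    \<Rightarrow> (nat \<Rightarrow> real) \<Rightarrow> nat \<Rightarrow> real" where
  "lap_sc d wd h P V x p i =
     2 * (\<Sum>j\<in>P - {i}. V j * ((p i - p j) / norm (x i - x j)) *
            (((1 / norm (x i - x j)) *\<^sub>R (x i - x j)) \<bullet> grad_wh d wd h (x i - x j)))"

text \<open>Unknowns: ut (tilde u^{k+1}) and u (u^{k+1}) in (R^d)^N, extended by 0 outside {1..N};
  p (p^{k+1}) in R^(Lambda_F \<union> Lambda_S), extended by 0 outside Lambda_F \<union> Lambda_S.
  fk i is the force vector f^k_i (only used for i in Lambda_F \<union> Lambda_S).
  impl = True: implicit scheme (b); impl = False: semi-implicit scheme.\<close>
definition isph_step ::
  "bool \<Rightarrow> nat \<Rightarrow> (real \<Rightarrow> real) \<Rightarrow> real \<Rightarrow> real \<Rightarrow> real \<Rightarrow> real \<Rightarrow> nat \<Rightarrow> (nat \<Rightarrow> real)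
   \<Rightarrow> (nat \<Rightarrow> 'a::euclidean_space) \<Rightarrow> nat set \<Rightarrow> nat set \<Rightarrow> nat set \<Rightarrow> (nat \<Rightarrow> 'a)
   \<Rightarrow> (nat \<Rightarrow> 'a) \<Rightarrow> (nat \<Rightarrow> 'a) \<Rightarrow> (nat \<Rightarrow> real) \<Rightarrow> (nat \<Rightarrow> 'a) \<Rightarrow> bool" where
  "isph_step impl d wd h rho nu dt N V x LF LS LW fk uk ut p u \<longleftrightarrow>
     (\<forall>i. i \<notin> {1..N} \<longrightarrow> ut i = 0 \<and> u i = 0) \<and>
     (\<forall>i. i \<notin> LF \<union> LS \<longrightarrow> p i = 0) \<and>
     (\<forall>i\<in>LF \<union> LS. (1 / dt) *\<^sub>R (ut i - uk i) =
         nu *\<^sub>R lap_vec d wd h N V x (if impl then ut else uk) i + fk i) \<and>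
     (\<forall>i\<in>LW. ut i = 0) \<and>
     (\<forall>i\<in>LF. lap_sc d wd h (LF \<union> LS) V x p i = (rho / dt) * div_vec d wd h N V x ut i) \<and>
     (\<forall>i\<in>LS. p i = 0) \<and>
     (\<forall>i\<in>LF \<union> LS. (1 / dt) *\<^sub>R (u i - ut i) = - ((1 / rho) *\<^sub>R grad_sc d wd h (LF \<union> LS) V x p i)) \<and>
     (\<forall>i\<in>LW. u i = 0)"

definition path_to :: "real \<Rightarrow> real \<Rightarrow> nat \<Rightarrow> (nat \<Rightarrow> 'a::euclidean_space) \<Rightarrow> nat set \<Rightarrow> nat set \<Rightarrow> nat \<Rightarrow> bool" where
  "path_to r0 h N x LF T i \<longleftrightarrow>
     (\<exists>cs. cs \<noteq> [] \<and> hd cs = i \<and> set cs \<subseteq> {1..N} \<and> last cs \<in> T \<and>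
        (\<forall>l. Suc l < length cs \<longrightarrow> cs ! l \<in> LF \<and>
              0 < dist (x (cs ! l)) (x (cs ! Suc l)) \<and> dist (x (cs ! l)) (x (cs ! Suc l)) < r0 * h))"

definition h_connected :: "real \<Rightarrow> real \<Rightarrow> nat \<Rightarrow> (nat \<Rightarrow> 'a::euclidean_space) \<Rightarrow> nat set \<Rightarrow> nat set \<Rightarrow> nat set \<Rightarrow> bool" where
  "h_connected r0 h N x LF LS LW \<longleftrightarrow>
     (\<forall>i\<in>LF. path_to r0 h N x LF LS i \<and> path_to r0 h N x LF LW i)"

end

theory Submission
  imports Defs "Jordan_Normal_Form.Determinant"
begin


lemma fin_lin_solve:
  fixes A :: "nat \<Rightarrow> nat \<Rightarrow> real" and b :: "nat \<Rightarrow> real" and I :: "nat set"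
  assumes fin: "finite I"
    and inj: "\<And>v. \<forall>i\<in>I. (\<Sum>j\<in>I. A i j * v j) = 0 \<Longrightarrow> \<forall>i\<in>I. v i = 0"
  shows "\<exists>v. \<forall>i\<in>I. (\<Sum>j\<in>I. A i j * v j) = b i"
proof -
  define n where "n = card I"
  obtain e where e: "bij_betw e {0..<n} I" using ex_bij_betw_nat_finite[OF fin] n_def by blast
  define g where "g = inv_into {0..<n} e"
  have ge: "\<And>j. j \<in> I \<Longrightarrow> g j < n \<and> e (g j) = j"
  proof -
    fix j assume j: "j \<in> I"
    have "g j \<in> {0..<n}" unfolding g_def using bij_betw_inv_into[OF e] j by (auto dest: bij_betwE)
    moreover have "e (g j) = j" unfolding g_def
      by (rule f_inv_into_f) (use j bij_betw_imp_surj_on[OF e] in simp)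
    ultimately show "g j < n \<and> e (g j) = j" by simp
  qed
  have eg: "\<And>k. k < n \<Longrightarrow> e k \<in> I \<and> g (e k) = k"
  proof -
    fix k assume k: "k < n"
    have "e k \<in> I" using e k by (auto dest: bij_betwE)
    moreover have "g (e k) = k" unfolding g_def using bij_betw_inv_into_left[OF e] k by simp
    ultimately show "e k \<in> I \<and> g (e k) = k" by simp
  qed
  have reidx: "\<And>F. (\<Sum>j\<in>I. F j) = (\<Sum>l\<in>{0..<n}. F (e l))"
    using sum.reindex_bij_betw[OF e] by metis
  define M :: "real mat" where "M = Matrix.mat n n (\<lambda>(k,l). A (e k) (e l))"
  have Mc: "M \<in> carrier_mat n n" unfolding M_def by simp
  have Mv: "\<And>v k. v \<in> carrier_vec n \<Longrightarrow> k < n \<Longrightarrow> vec_index (M *\<^sub>v v) k = (\<Sum>l\<in>{0..<n}. A (e k) (e l) * vec_index v l)"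
    unfolding M_def by (simp add: scalar_prod_def)
  have "Determinant.det M \<noteq> 0"
  proof
    assume "Determinant.det M = 0"
    then obtain v where v: "v \<in> carrier_vec n" "v \<noteq> 0\<^sub>v n" "M *\<^sub>v v = 0\<^sub>v n"
      using det_0_iff_vec_prod_zero[OF Mc] by blast
    define w where "w j = vec_index v (g j)" for j
    have "\<forall>i\<in>I. (\<Sum>j\<in>I. A i j * w j) = 0"
    proof
      fix i assume i: "i \<in> I"
      have "(\<Sum>j\<in>I. A i j * w j) = (\<Sum>l\<in>{0..<n}. A (e (g i)) (e l) * vec_index v l)"
        using reidx[of "\<lambda>j. A i j * w j"] eg ge i unfolding w_def by simp
      also have "\<dots> = vec_index (M *\<^sub>v v) (g i)" using Mv v(1) ge i by simp
      also have "\<dots> = 0" using v(3) ge i by simp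
      finally show "(\<Sum>j\<in>I. A i j * w j) = 0" .
    qed
    then have "\<forall>i\<in>I. w i = 0" by (rule inj)
    then have "v = 0\<^sub>v n" using v(1) eg unfolding w_def by (intro eq_vecI) (auto, metis)
    with v(2) show False by simp
  qed
  from det_non_zero_imp_unit[OF Mc this, unfolded Units_def, of "()"]
  obtain B where B: "B \<in> carrier_mat n n" and MB: "M * B = 1\<^sub>m n"
    by (auto simp: ring_mat_def)
  define bv where "bv = Matrix.vec n (\<lambda>k. b (e k))"
  define x where "x = B *\<^sub>v bv"
  have xc: "x \<in> carrier_vec n" unfolding x_def bv_def using B by simp
  have Mx: "M *\<^sub>v x = bv" unfolding x_def using B Mc MB
    by (metis assoc_mult_mat_vec bv_def one_mult_mat_vec vec_carrier)
  show ?thesis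
  proof (intro exI ballI)
    fix i assume i: "i \<in> I"
    have "(\<Sum>j\<in>I. A i j * vec_index x (g j)) = (\<Sum>l\<in>{0..<n}. A (e (g i)) (e l) * vec_index x l)"
      using reidx[of "\<lambda>j. A i j * vec_index x (g j)"] eg ge i by simp
    also have "\<dots> = vec_index (M *\<^sub>v x) (g i)" using Mv xc ge i by simp
    also have "\<dots> = b i" using Mx ge i unfolding bv_def by simp
    finally show "(\<Sum>j\<in>I. A i j * vec_index x (g j)) = b i" .
  qed
qed


lemma vel_hom:
  fixes v W :: "nat \<Rightarrow> _" and dt :: real
  assumes J: "finite J" and PJ: "P \<subseteq> J" and dt: "dt > 0"
    and W: "\<forall>i\<in>P. \<forall>j\<in>J. W i j \<ge> (0::real)"
    and z: "\<forall>j\<in>J - P. v j = 0"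
    and eq: "\<forall>i\<in>P. v i / dt + (\<Sum>j\<in>J-{i}. W i j * (v i - v j)) = 0"
  shows "\<forall>i\<in>P. v i = (0::real)"
proof (cases "P = {}")
  case True then show ?thesis by simp
next
  case False
  have P: "finite P" using J PJ finite_subset by blast
  define m where "m = Max ((\<lambda>j. \<bar>v j\<bar>) ` P)"
  have mge: "\<And>j. j \<in> P \<Longrightarrow> \<bar>v j\<bar> \<le> m" unfolding m_def using P by (intro Max_ge) auto
  have "m \<in> (\<lambda>j. \<bar>v j\<bar>) ` P" unfolding m_def using P False by (intro Max_in) auto
  then obtain i0 where i0: "i0 \<in> P" "\<bar>v i0\<bar> = m" by auto
  have m0: "m \<ge> 0" using i0 by auto
  have mJ: "\<And>j. j \<in> J \<Longrightarrow> \<bar>v j\<bar> \<le> m" using mge z m0 by (metis DiffI abs_zero)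
  define S where "S = (\<Sum>j\<in>J-{i0}. W i0 j)"
  have S0: "S \<ge> 0" unfolding S_def using W i0 by (intro sum_nonneg) auto
  have "(\<Sum>j\<in>J-{i0}. W i0 j * (v i0 - v j)) = S * v i0 - (\<Sum>j\<in>J-{i0}. W i0 j * v j)"
    unfolding S_def by (simp add: right_diff_distrib sum_subtractf sum_distrib_left sum_distrib_right mult.commute)
  with eq i0 have e: "v i0 / dt + S * v i0 = (\<Sum>j\<in>J-{i0}. W i0 j * v j)" by auto
  have A: "\<bar>v i0 / dt + S * v i0\<bar> = m / dt + S * m"
  proof -
    have a: "v i0 / dt + S * v i0 = v i0 * (1/dt + S)" by (simp add: field_simps)
    have "1/dt + S > 0" using dt S0 by (simp add: add_pos_nonneg)
    then have "\<bar>v i0 * (1/dt + S)\<bar> = m * (1/dt + S)" using i0 by (simp add: abs_mult)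
    then show ?thesis using a by (simp add: algebra_simps)
  qed
  have "m / dt + S * m = \<bar>\<Sum>j\<in>J-{i0}. W i0 j * v j\<bar>" using e A by simp
  also have "\<dots> \<le> (\<Sum>j\<in>J-{i0}. \<bar>W i0 j * v j\<bar>)" by (rule sum_abs)
  also have "\<dots> \<le> (\<Sum>j\<in>J-{i0}. W i0 j * m)"
  proof (rule sum_mono)
    fix j assume j: "j \<in> J - {i0}"
    have "\<bar>W i0 j * v j\<bar> = W i0 j * \<bar>v j\<bar>" using W i0 j by (simp add: abs_mult)
    also have "\<dots> \<le> W i0 j * m" using W i0 j mJ by (intro mult_left_mono) auto
    finally show "\<bar>W i0 j * v j\<bar> \<le> W i0 j * m" .
  qed
  also have "\<dots> = S * m" unfolding S_def by (simp add: sum_distrib_right)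
  finally have "m / dt \<le> 0" by simp
  then have "m = 0" using m0 dt by (simp add: divide_le_0_iff)
  then show ?thesis using mge by fastforce
qed

lemma pres_hom:
  fixes p Z :: "nat \<Rightarrow> _"
  assumes P: "finite P" and FP: "F \<subseteq> P" and Z: "\<forall>i\<in>P. \<forall>j\<in>P. Z i j \<ge> (0::real)"
    and z: "\<forall>j\<in>P-F. p j = 0"
    and eq: "\<forall>i\<in>F. (\<Sum>j\<in>P-{i}. Z i j * (p i - p j)) = 0"
    and path: "\<forall>i\<in>F. \<exists>cs. cs \<noteq> [] \<and> hd cs = i \<and> set cs \<subseteq> P \<and> last cs \<notin> F \<and>
        (\<forall>l. Suc l < length cs \<longrightarrow> cs!l \<in> F \<and> cs!Suc l \<noteq> cs!l \<and> Z (cs!l) (cs!Suc l) > 0)"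
  shows "\<forall>i\<in>F. p i \<le> (0::real)"
proof (rule ccontr)
  assume "\<not> ?thesis"
  then obtain i1 where i1: "i1 \<in> F" "p i1 > 0" by auto
  define m where "m = Max (p ` P)"
  have mge: "\<And>j. j \<in> P \<Longrightarrow> p j \<le> m" unfolding m_def using P by (intro Max_ge) auto
  have "m \<in> p ` P" unfolding m_def using P i1 FP by (intro Max_in) auto
  then obtain i0 where i0: "i0 \<in> P" "p i0 = m" by auto
  have mpos: "m > 0" using mge[of i1] i1 FP by auto
  have i0F: "i0 \<in> F" using i0 z mpos by force
  have propag: "p j = m" if i: "i \<in> F" "p i = m" and j: "j \<in> P" "j \<noteq> i" "Z i j > 0" for i j
  proof -
    have nn: "\<forall>l\<in>P-{i}. 0 \<le> Z i l * (p i - p l)" using Z i FP mge by (auto intro!: mult_nonneg_nonneg)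
    have "(\<Sum>l\<in>P-{i}. Z i l * (p i - p l)) = 0" using eq i by auto
    then have "\<forall>l\<in>P-{i}. Z i l * (p i - p l) = 0" using sum_nonneg_eq_0_iff[of "P-{i}" "\<lambda>l. Z i l * (p i - p l)"] P nn by auto
    then have "Z i j * (p i - p j) = 0" using j(1,2) by blast
    then have "p i = p j" using j by simp
    then show ?thesis using i by simp
  qed
  obtain cs where cs: "cs \<noteq> []" "hd cs = i0" "set cs \<subseteq> P" "last cs \<notin> F"
    "\<forall>l. Suc l < length cs \<longrightarrow> cs!l \<in> F \<and> cs!Suc l \<noteq> cs!l \<and> Z (cs!l) (cs!Suc l) > 0"
    using path i0F by blast
  have all: "l < length cs \<Longrightarrow> p (cs!l) = m" for l
  proof (induction l)
    case 0 then show ?case using cs i0 by (simp add: hd_conv_nth)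
  next
    case (Suc l)
    then have "p (cs!l) = m" by simp
    moreover have "cs!Suc l \<in> P" using cs(3) Suc.prems by (meson nth_mem subsetD)
    ultimately show ?case using propag[of "cs!l" "cs!Suc l"] cs(5) Suc.prems by blast
  qed
  have "p (last cs) = m" using all[of "length cs - 1"] cs(1) by (simp add: last_conv_nth)
  moreover have "p (last cs) = 0" using z cs by (simp add: subset_iff)
  ultimately show False using mpos by simp
qed

lemma conv:
  fixes W v :: "nat \<Rightarrow> _"
  assumes J: "finite J" and IJ: "I \<subseteq> J" and i: "i \<in> I" and z: "\<forall>j\<in>J - I. v j = 0"
  shows "(\<Sum>j\<in>J-{i}. W i j * (v i - v j)) =
         (\<Sum>j\<in>I. (if j = i then (\<Sum>l\<in>J-{i}. W i l) else - W i j) * (v j::real))"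
proof -
  have I: "finite I" using J IJ finite_subset by blast
  have 1: "(\<Sum>j\<in>J-{i}. W i j * (v i - v j)) = (\<Sum>l\<in>J-{i}. W i l) * v i - (\<Sum>j\<in>J-{i}. W i j * v j)"
    by (simp add: right_diff_distrib sum_subtractf sum_distrib_left sum_distrib_right mult.commute)
  have 2: "(\<Sum>j\<in>J-{i}. W i j * v j) = (\<Sum>j\<in>I-{i}. W i j * v j)"
    using J IJ z by (intro sum.mono_neutral_right) auto
  have 3: "(\<Sum>j\<in>I. (if j = i then (\<Sum>l\<in>J-{i}. W i l) else - W i j) * v j)
      = (\<Sum>l\<in>J-{i}. W i l) * v i + (\<Sum>j\<in>I-{i}. (if j = i then (\<Sum>l\<in>J-{i}. W i l) else - W i j) * v j)"
    using I i by (simp add: sum.remove)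
  have 4: "(\<Sum>j\<in>I-{i}. (if j = i then (\<Sum>l\<in>J-{i}. W i l) else - W i j) * v j) = - (\<Sum>j\<in>I-{i}. W i j * v j)"
    by (simp add: sum_negf[symmetric])
  show ?thesis using 1 2 3 4 by simp
qed



lemma cgrad:
  fixes r :: "'a::euclidean_space"
  shows "(1 / norm r) * (((1 / norm r) *\<^sub>R r) \<bullet> grad_wh d wd h r) = wh_dot d wd h (norm r) / norm r"
proof (cases "r = 0")
  case True then show ?thesis by (simp add: grad_wh_def)
next
  case False
  then have n: "norm r \<noteq> 0" by simp
  have "r \<bullet> r = norm r ^ 2" by (simp add: power2_norm_eq_inner)
  then show ?thesis using False n unfolding grad_wh_def
    by (simp add: field_simps power2_eq_square)
qed

lemma lapvec_c:
  "lap_vec d wd h N V x v i = 2 *\<^sub>R (\<Sum>j\<in>{1..N}-{i}. (V j * (wh_dot d wd h (norm (x i - x j)) / norm (x i - x j))) *\<^sub>R (v i - v j))"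
  unfolding lap_vec_def cgrad ..

lemma lapsc_c:
  "lap_sc d wd h P V x p i = 2 * (\<Sum>j\<in>P-{i}. (V j * (wh_dot d wd h (norm (x i - x j)) / norm (x i - x j))) * (p i - p j))"
  unfolding lap_sc_def
proof (intro arg_cong[where f="\<lambda>s. 2 * s"] sum.cong refl)
  fix j
  let ?r = "x i - x j"
  have "V j * ((p i - p j) / norm ?r) * ((1 / norm ?r) *\<^sub>R ?r \<bullet> grad_wh d wd h ?r)
     = V j * ((1 / norm ?r) * ((1 / norm ?r) *\<^sub>R ?r \<bullet> grad_wh d wd h ?r)) * (p i - p j)"
    by (simp add: field_simps)
  then show "V j * ((p i - p j) / norm ?r) * ((1 / norm ?r) *\<^sub>R ?r \<bullet> grad_wh d wd h ?r)
     = V j * (wh_dot d wd h (norm ?r) / norm ?r) * (p i - p j)" by (simp only: cgrad)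
qed

lemma cc_le:
  assumes "\<forall>s\<ge>0. wd s \<le> (0::real)" "h > 0" "t \<ge> 0"
  shows "wh_dot d wd h t / t \<le> 0"
  using assms unfolding wh_dot_def by (simp add: divide_nonpos_nonneg)

lemma cc_lt:
  assumes "\<forall>s. 0 < s \<and> s < r0 \<longrightarrow> wd s < (0::real)" "h > 0" "0 < t" "t < r0 * h"
  shows "wh_dot d wd h t / t < 0"
proof -
  have "0 < t / h" "t / h < r0" using assms by (auto simp: field_simps)
  then have "wd (t/h) < 0" using assms by blast
  then show ?thesis using assms unfolding wh_dot_def by (simp add: divide_neg_pos)
qed

lemma sum_delta_plus:
  fixes B v :: "nat \<Rightarrow> real"
  assumes "finite I" "i \<in> I"
  shows "(\<Sum>j\<in>I. ((if j = i then c else 0) + B j) * v j) = c * v i + (\<Sum>j\<in>I. B j * v j)"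
  using assms by (simp add: distrib_right sum.distrib if_distrib[of "\<lambda>a. a * _"] cong: if_cong)

lemma ex1_triple:
  assumes "\<exists>!a. A a" "\<And>a. A a \<Longrightarrow> \<exists>!b. B a b" "\<And>a b. A a \<Longrightarrow> B a b \<Longrightarrow> \<exists>!c. C a b c"
  shows "\<exists>!(a, b, c). A a \<and> B a b \<and> C a b c"
proof -
  from assms(1) obtain a where a: "A a" and au: "\<And>a'. A a' \<Longrightarrow> a' = a" by (elim ex1E) blast
  from assms(2)[OF a] obtain b where b: "B a b" and bu: "\<And>b'. B a b' \<Longrightarrow> b' = b" by (elim ex1E) blast
  from assms(3)[OF a b] obtain c where c: "C a b c" and cu: "\<And>c'. C a b c' \<Longrightarrow> c' = c" by (elim ex1E) blast
  show ?thesis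
  proof (rule ex1I[of _ "(a, b, c)"])
    show "case (a, b, c) of (a, b, c) \<Rightarrow> A a \<and> B a b \<and> C a b c" using a b c by simp
  next
    fix y assume y: "case y of (a, b, c) \<Rightarrow> A a \<and> B a b \<and> C a b c"
    obtain a' b' c' where yy: "y = (a', b', c')" by (cases y) auto
    have "a' = a" using y yy au by simp
    moreover have "b' = b" using y yy bu \<open>a' = a\<close> by simp
    moreover have "c' = c" using y yy cu \<open>a' = a\<close> \<open>b' = b\<close> by simp
    ultimately show "y = (a, b, c)" using yy by simp
  qed
qed



context
  fixes d :: nat and wd :: "real \<Rightarrow> real" and h r0 rho nu dt :: real and N :: nat
    and V :: "nat \<Rightarrow> real" and x :: "nat \<Rightarrow> 'a::euclidean_space"
    and LF LS LW :: "nat set" and fk uk :: "nat \<Rightarrow> 'a"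
  assumes wdle: "\<forall>s\<ge>0. wd s \<le> 0" and wdlt: "\<forall>s. 0 < s \<and> s < r0 \<longrightarrow> wd s < 0"
    and h: "h > 0" and rho: "rho > 0" and nu: "nu > 0" and dt: "dt > 0"
    and Vpos: "\<forall>i\<in>{1..N}. V i > 0"
    and part: "LF \<union> LS \<union> LW = {1..N}" "LF \<inter> LS = {}" "LF \<inter> LW = {}" "LS \<inter> LW = {}"
    and conn: "h_connected r0 h N x LF LS LW"
begin

definition "cc i j = wh_dot d wd h (norm (x i - x j)) / norm (x i - x j)"
definition "WW i j = - 2 * nu * V j * cc i j"
definition "ZZ i j = - 2 * V j * cc i j"

lemma cc_nonpos: "cc i j \<le> 0"
  unfolding cc_def by (rule cc_le[OF wdle h]) simp

lemma WW_nonneg: "j \<in> {1..N} \<Longrightarrow> WW i j \<ge> 0"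
  unfolding WW_def using cc_nonpos[of i j] Vpos nu
  by (simp add: mult_nonneg_nonpos mult_nonpos_nonpos less_imp_le)

lemma ZZ_nonneg: "j \<in> {1..N} \<Longrightarrow> ZZ i j \<ge> 0"
  unfolding ZZ_def using cc_nonpos[of i j] Vpos
  by (simp add: mult_nonneg_nonpos mult_nonpos_nonpos less_imp_le)

lemma ZZ_pos: "j \<in> {1..N} \<Longrightarrow> 0 < dist (x i) (x j) \<Longrightarrow> dist (x i) (x j) < r0 * h \<Longrightarrow> ZZ i j > 0"
proof -
  assume j: "j \<in> {1..N}" and a: "0 < dist (x i) (x j)" "dist (x i) (x j) < r0 * h"
  have "cc i j < 0" unfolding cc_def using cc_lt[OF wdlt h, of "norm (x i - x j)" d] a by (simp add: dist_norm)
  moreover have "V j > 0" using Vpos j by blast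
  ultimately have "V j * cc i j < 0" by (simp add: mult_pos_neg)
  then show ?thesis unfolding ZZ_def by simp
qed

lemma J_fin: "finite {1..N::nat}" by simp
lemma P_sub: "LF \<union> LS \<subseteq> {1..N}" using part by auto
lemma LW_eq: "{1..N} - (LF \<union> LS) = LW" using part by auto
lemma P_LF: "(LF \<union> LS) - LF = LS" using part by auto

lemma lapvec_comp:
  "nu * (lap_vec d wd h N V x v i \<bullet> b) = - (\<Sum>j\<in>{1..N}-{i}. WW i j * (v i \<bullet> b - v j \<bullet> b))"
proof -
  have "nu * (lap_vec d wd h N V x v i \<bullet> b) = nu * (2 * (\<Sum>j\<in>{1..N}-{i}. (V j * cc i j) * (v i \<bullet> b - v j \<bullet> b)))"
    unfolding lapvec_c cc_def by (simp add: inner_sum_left inner_diff_left)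
  also have "\<dots> = - (\<Sum>j\<in>{1..N}-{i}. WW i j * (v i \<bullet> b - v j \<bullet> b))"
    unfolding WW_def by (simp add: sum_distrib_left sum_negf[symmetric] algebra_simps)
  finally show ?thesis .
qed

lemma lapsc_Z: "lap_sc d wd h P V x p i = - (\<Sum>j\<in>P-{i}. ZZ i j * (p i - p j))"
  unfolding lapsc_c ZZ_def cc_def by (simp add: sum_distrib_left sum_negf[symmetric] algebra_simps)

lemma paths:
  "\<forall>i\<in>LF. \<exists>cs. cs \<noteq> [] \<and> hd cs = i \<and> set cs \<subseteq> LF \<union> LS \<and> last cs \<notin> LF \<and>
        (\<forall>l. Suc l < length cs \<longrightarrow> cs!l \<in> LF \<and> cs!Suc l \<noteq> cs!l \<and> ZZ (cs!l) (cs!Suc l) > 0)"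
proof
  fix i assume i: "i \<in> LF"
  then obtain cs where cs: "cs \<noteq> []" "hd cs = i" "set cs \<subseteq> {1..N}" "last cs \<in> LS"
     "\<forall>l. Suc l < length cs \<longrightarrow> cs ! l \<in> LF \<and>
              0 < dist (x (cs ! l)) (x (cs ! Suc l)) \<and> dist (x (cs ! l)) (x (cs ! Suc l)) < r0 * h"
    using conn unfolding h_connected_def path_to_def by blast
  show "\<exists>cs. cs \<noteq> [] \<and> hd cs = i \<and> set cs \<subseteq> LF \<union> LS \<and> last cs \<notin> LF \<and>
        (\<forall>l. Suc l < length cs \<longrightarrow> cs!l \<in> LF \<and> cs!Suc l \<noteq> cs!l \<and> ZZ (cs!l) (cs!Suc l) > 0)"
  proof (intro exI conjI allI impI)
    show "cs \<noteq> []" "hd cs = i" by (fact cs)+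
    show "set cs \<subseteq> LF \<union> LS"
    proof
      fix y assume "y \<in> set cs"
      then obtain l where l: "l < length cs" "y = cs ! l" by (auto simp: in_set_conv_nth)
      show "y \<in> LF \<union> LS"
      proof (cases "Suc l < length cs")
        case True then show ?thesis using cs(5) l by blast
      next
        case False then have "l = length cs - 1" using l by simp
        then have "y = last cs" using l cs(1) by (simp add: last_conv_nth)
        then show ?thesis using cs(4) by simp
      qed
    qed
    show "last cs \<notin> LF" using cs(4) part by auto
    fix l assume l: "Suc l < length cs"
    show "cs ! l \<in> LF" using cs(5) l by blast
    show "cs ! Suc l \<noteq> cs ! l" using cs(5) l by force
    have "cs ! Suc l \<in> {1..N}" using cs(3) l by (meson nth_mem subsetD)
    then show "ZZ (cs!l) (cs!Suc l) > 0" using cs(5) l ZZ_pos by blast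
  qed
qed


definition "VEL impl ut \<longleftrightarrow> (\<forall>i. i \<notin> {1..N} \<longrightarrow> ut i = 0) \<and>
   (\<forall>i\<in>LF \<union> LS. (1 / dt) *\<^sub>R (ut i - uk i) = nu *\<^sub>R lap_vec d wd h N V x (if impl then ut else uk) i + fk i) \<and>
   (\<forall>i\<in>LW. ut i = 0)"
definition "PR ut p \<longleftrightarrow> (\<forall>i. i \<notin> LF \<union> LS \<longrightarrow> p i = 0) \<and>
   (\<forall>i\<in>LF. lap_sc d wd h (LF \<union> LS) V x p i = (rho / dt) * div_vec d wd h N V x ut i) \<and> (\<forall>i\<in>LS. p i = 0)"
definition "UU ut p u \<longleftrightarrow> (\<forall>i. i \<notin> {1..N} \<longrightarrow> u i = 0) \<and>
   (\<forall>i\<in>LF \<union> LS. (1 / dt) *\<^sub>R (u i - ut i) = - ((1 / rho) *\<^sub>R grad_sc d wd h (LF \<union> LS) V x p i)) \<and>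
   (\<forall>i\<in>LW. u i = 0)"

lemma step_split: "isph_step impl d wd h rho nu dt N V x LF LS LW fk uk ut p u \<longleftrightarrow>
   VEL impl ut \<and> PR ut p \<and> UU ut p u"
  unfolding isph_step_def VEL_def PR_def UU_def by blast

lemma LW_disj: "i \<in> LW \<Longrightarrow> i \<notin> LF \<union> LS" using part by blast

lemma VEL_zero: "VEL impl ut \<Longrightarrow> j \<notin> LF \<union> LS \<Longrightarrow> ut j = 0"
  unfolding VEL_def using part by blast

lemma VEL_semi: "\<exists>!ut. VEL False ut"
proof
  define w where "w i = (if i \<in> LF \<union> LS then uk i + dt *\<^sub>R (nu *\<^sub>R lap_vec d wd h N V x uk i + fk i) else 0)" for i
  have sc: "\<And>E. (1/dt) *\<^sub>R (dt *\<^sub>R E) = (E::'a)" using dt by simp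
  show "VEL False w" unfolding VEL_def
  proof (intro conjI allI impI ballI)
    fix i assume "i \<notin> {1..N}" then show "w i = 0" using P_sub unfolding w_def by auto
  next
    fix i assume "i \<in> LW" then show "w i = 0" using LW_disj unfolding w_def by auto
  next
    fix i assume i: "i \<in> LF \<union> LS"
    then have "w i - uk i = dt *\<^sub>R (nu *\<^sub>R lap_vec d wd h N V x uk i + fk i)" unfolding w_def by simp
    then show "(1 / dt) *\<^sub>R (w i - uk i) = nu *\<^sub>R lap_vec d wd h N V x (if False then w else uk) i + fk i"
      using sc by simp
  qed
  fix ut assume u: "VEL False ut"
  show "ut = w"
  proof
    fix i show "ut i = w i"
    proof (cases "i \<in> LF \<union> LS")
      case True
      have a: "(1 / dt) *\<^sub>R (ut i - uk i) = nu *\<^sub>R lap_vec d wd h N V x uk i + fk i"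
        using u True unfolding VEL_def by simp
      have "ut i - uk i = dt *\<^sub>R ((1 / dt) *\<^sub>R (ut i - uk i))" using dt by simp
      then have "ut i - uk i = dt *\<^sub>R (nu *\<^sub>R lap_vec d wd h N V x uk i + fk i)" using a by simp
      then show ?thesis using True unfolding w_def by (simp add: algebra_simps)
    next
      case False then show ?thesis using VEL_zero[OF u] unfolding w_def by simp
    qed
  qed
qed

lemma VEL_impl_unique: "VEL True u1 \<Longrightarrow> VEL True u2 \<Longrightarrow> u1 = u2"
proof
  fix j assume u1: "VEL True u1" and u2: "VEL True u2"
  show "u1 j = u2 j"
  proof (rule euclidean_eqI)
    fix b :: 'a assume b: "b \<in> Basis"
    define v where "v j = u1 j \<bullet> b - u2 j \<bullet> b" for j
    have z: "\<forall>j\<in>{1..N} - (LF \<union> LS). v j = 0" unfolding v_def using VEL_zero[OF u1] VEL_zero[OF u2] by simp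
    have eq: "\<forall>i\<in>LF \<union> LS. v i / dt + (\<Sum>j\<in>{1..N}-{i}. WW i j * (v i - v j)) = 0"
    proof
      fix i assume i: "i \<in> LF \<union> LS"
      have e1: "(u1 i \<bullet> b - uk i \<bullet> b) / dt = - (\<Sum>j\<in>{1..N}-{i}. WW i j * (u1 i \<bullet> b - u1 j \<bullet> b)) + fk i \<bullet> b"
        using arg_cong[where f="\<lambda>z. z \<bullet> b", OF u1[unfolded VEL_def, THEN conjunct2, THEN conjunct1, rule_format, OF i]]
        by (simp add: lapvec_comp inner_add_left inner_diff_left)
      have e2: "(u2 i \<bullet> b - uk i \<bullet> b) / dt = - (\<Sum>j\<in>{1..N}-{i}. WW i j * (u2 i \<bullet> b - u2 j \<bullet> b)) + fk i \<bullet> b"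
        using arg_cong[where f="\<lambda>z. z \<bullet> b", OF u2[unfolded VEL_def, THEN conjunct2, THEN conjunct1, rule_format, OF i]]
        by (simp add: lapvec_comp inner_add_left inner_diff_left)
      have "(\<Sum>j\<in>{1..N}-{i}. WW i j * (v i - v j)) = (\<Sum>j\<in>{1..N}-{i}. WW i j * (u1 i \<bullet> b - u1 j \<bullet> b)) - (\<Sum>j\<in>{1..N}-{i}. WW i j * (u2 i \<bullet> b - u2 j \<bullet> b))"
        unfolding v_def sum_subtractf[symmetric] by (intro sum.cong) (auto simp: algebra_simps)
      moreover have "v i / dt = (u1 i \<bullet> b - uk i \<bullet> b) / dt - (u2 i \<bullet> b - uk i \<bullet> b) / dt"
        unfolding v_def by (simp add: diff_divide_distrib)
      ultimately show "v i / dt + (\<Sum>j\<in>{1..N}-{i}. WW i j * (v i - v j)) = 0" using e1 e2 by simp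
    qed
    have "\<forall>i\<in>LF \<union> LS. v i = 0"
      by (rule vel_hom[OF J_fin P_sub dt _ z eq]) (use WW_nonneg in blast)
    then have "v j = 0" using VEL_zero[OF u1, of j] VEL_zero[OF u2, of j] unfolding v_def by (cases "j \<in> LF \<union> LS") auto
    then show "u1 j \<bullet> b = u2 j \<bullet> b" unfolding v_def by simp
  qed
qed


lemma VEL_impl_ex: "\<exists>ut. VEL True ut"
proof -
  let ?P = "LF \<union> LS" and ?J = "{1..N::nat}"
  have Pfin: "finite ?P" using P_sub finite_subset by blast
  define B where "B i j = (if j = i then (\<Sum>l\<in>?J-{i}. WW i l) else - WW i j)" for i j
  define A where "A i j = (if j = i then 1/dt else 0) + B i j" for i j
  have Aeq: "(\<Sum>j\<in>?P. A i j * v j) = v i / dt + (\<Sum>j\<in>?J-{i}. WW i j * (v i - v j))"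
    if i: "i \<in> ?P" and z: "\<forall>j\<in>?J - ?P. v j = 0" for i v
  proof -
    have "(\<Sum>j\<in>?P. A i j * v j) = (1/dt) * v i + (\<Sum>j\<in>?P. B i j * v j)"
      unfolding A_def by (rule sum_delta_plus[OF Pfin i])
    also have "(\<Sum>j\<in>?P. B i j * v j) = (\<Sum>j\<in>?J-{i}. WW i j * (v i - v j))"
      unfolding B_def by (rule conv[OF J_fin P_sub i z, symmetric])
    finally show ?thesis by simp
  qed
  have injA: "\<forall>i\<in>?P. v i = 0" if h0: "\<forall>i\<in>?P. (\<Sum>j\<in>?P. A i j * v j) = 0" for v
  proof -
    define v' where "v' j = (if j \<in> ?P then v j else 0)" for j
    have z: "\<forall>j\<in>?J - ?P. v' j = 0" unfolding v'_def by simp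
    have "\<forall>i\<in>?P. v' i / dt + (\<Sum>j\<in>?J-{i}. WW i j * (v' i - v' j)) = 0"
    proof
      fix i assume i: "i \<in> ?P"
      have "(\<Sum>j\<in>?P. A i j * v' j) = (\<Sum>j\<in>?P. A i j * v j)" unfolding v'_def by (rule sum.cong) auto
      then show "v' i / dt + (\<Sum>j\<in>?J-{i}. WW i j * (v' i - v' j)) = 0" using Aeq[OF i z] h0 i by simp
    qed
    then have "\<forall>i\<in>?P. v' i = 0"
      using vel_hom[OF J_fin P_sub dt _ z, of WW] WW_nonneg by blast
    then show ?thesis unfolding v'_def by simp
  qed
  have "\<forall>b. \<exists>v. \<forall>i\<in>?P. (\<Sum>j\<in>?P. A i j * v j) = uk i \<bullet> b / dt + fk i \<bullet> b"
  proof
    fix b show "\<exists>v. \<forall>i\<in>?P. (\<Sum>j\<in>?P. A i j * v j) = uk i \<bullet> b / dt + fk i \<bullet> b"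
      by (rule fin_lin_solve[OF Pfin, of A]) (rule injA)
  qed
  then obtain vb where vb: "\<And>b i. i \<in> ?P \<Longrightarrow> (\<Sum>j\<in>?P. A i j * vb b j) = uk i \<bullet> b / dt + fk i \<bullet> b"
    by metis
  define ut where "ut j = (if j \<in> ?P then (\<Sum>b\<in>Basis. vb b j *\<^sub>R b) else 0)" for j
  have comp: "ut j \<bullet> b = (if j \<in> ?P then vb b j else 0)" if b: "b \<in> Basis" for j b
    unfolding ut_def using b by (simp add: inner_sum_left inner_Basis if_distrib[of "\<lambda>a. _ * a"] cong: if_cong)
  show ?thesis
  proof (intro exI)
    show "VEL True ut" unfolding VEL_def
    proof (intro conjI allI impI ballI)
      fix i assume "i \<notin> ?J" then show "ut i = 0" using P_sub unfolding ut_def by auto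
    next
      fix i assume "i \<in> LW" then show "ut i = 0" using LW_disj unfolding ut_def by auto
    next
      fix i assume i: "i \<in> ?P"
      show "(1 / dt) *\<^sub>R (ut i - uk i) = nu *\<^sub>R lap_vec d wd h N V x (if True then ut else uk) i + fk i"
      proof (rule euclidean_eqI)
        fix b :: 'a assume b: "b \<in> Basis"
        define w where "w j = ut j \<bullet> b" for j
        have wz: "\<forall>j\<in>?J - ?P. w j = 0" unfolding w_def using comp[OF b] by simp
        have "(\<Sum>j\<in>?J-{i}. WW i j * (w i - w j)) = (\<Sum>j\<in>?P. B i j * w j)"
          unfolding B_def by (rule conv[OF J_fin P_sub i wz])
        also have "\<dots> = (\<Sum>j\<in>?P. B i j * vb b j)" unfolding w_def using comp[OF b] by (intro sum.cong) auto
        finally have s1: "(\<Sum>j\<in>?J-{i}. WW i j * (w i - w j)) = (\<Sum>j\<in>?P. B i j * vb b j)" .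
        have s2: "(\<Sum>j\<in>?P. A i j * vb b j) = (1/dt) * vb b i + (\<Sum>j\<in>?P. B i j * vb b j)"
          unfolding A_def by (rule sum_delta_plus[OF Pfin i])
        have wi: "w i = vb b i" unfolding w_def using comp[OF b] i by simp
        have "nu * (lap_vec d wd h N V x ut i \<bullet> b) = - (\<Sum>j\<in>?J-{i}. WW i j * (w i - w j))"
          unfolding w_def by (rule lapvec_comp)
        then show "((1 / dt) *\<^sub>R (ut i - uk i)) \<bullet> b = (nu *\<^sub>R lap_vec d wd h N V x (if True then ut else uk) i + fk i) \<bullet> b"
          using s1 s2 vb[OF i, of b] wi unfolding w_def
          by (simp add: inner_diff_left inner_add_left diff_divide_distrib)
      qed
    qed
  qed
qed

lemma VEL_impl: "\<exists>!ut. VEL True ut"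
  using VEL_impl_ex VEL_impl_unique by blast


lemma ZZ_nonneg_P: "\<forall>i\<in>LF \<union> LS. \<forall>j\<in>LF \<union> LS. ZZ i j \<ge> 0"
  using ZZ_nonneg P_sub by blast

lemma pres_zero:
  fixes q :: "nat \<Rightarrow> real"
  assumes z: "\<forall>j\<in>(LF \<union> LS) - LF. q j = 0"
    and eq: "\<forall>i\<in>LF. (\<Sum>j\<in>(LF \<union> LS)-{i}. ZZ i j * (q i - q j)) = 0"
  shows "\<forall>i\<in>LF. q i = 0"
proof -
  have Pfin: "finite (LF \<union> LS)" using P_sub finite_subset by blast
  have LFP: "LF \<subseteq> LF \<union> LS" by blast
  have a: "\<forall>i\<in>LF. q i \<le> 0" by (rule pres_hom[OF Pfin LFP ZZ_nonneg_P z eq paths])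
  have z': "\<forall>j\<in>(LF \<union> LS) - LF. (- q j) = 0" using z by simp
  have eq': "\<forall>i\<in>LF. (\<Sum>j\<in>(LF \<union> LS)-{i}. ZZ i j * ((- q i) - (- q j))) = 0"
  proof
    fix i assume i: "i \<in> LF"
    have "(\<Sum>j\<in>(LF \<union> LS)-{i}. ZZ i j * ((- q i) - (- q j))) = - (\<Sum>j\<in>(LF \<union> LS)-{i}. ZZ i j * (q i - q j))"
      by (simp add: sum_negf[symmetric] algebra_simps)
    then show "(\<Sum>j\<in>(LF \<union> LS)-{i}. ZZ i j * ((- q i) - (- q j))) = 0" using eq i by simp
  qed
  have b: "\<forall>i\<in>LF. - q i \<le> 0" by (rule pres_hom[OF Pfin LFP ZZ_nonneg_P z' eq' paths])
  show ?thesis using a b by force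
qed

lemma PR_unique: "PR ut p1 \<Longrightarrow> PR ut p2 \<Longrightarrow> p1 = p2"
proof
  fix j assume p1: "PR ut p1" and p2: "PR ut p2"
  define q where "q j = p1 j - p2 j" for j
  have z: "\<forall>j\<in>(LF \<union> LS) - LF. q j = 0" using p1 p2 unfolding PR_def q_def by auto
  have eq: "\<forall>i\<in>LF. (\<Sum>j\<in>(LF \<union> LS)-{i}. ZZ i j * (q i - q j)) = 0"
  proof
    fix i assume i: "i \<in> LF"
    have "lap_sc d wd h (LF \<union> LS) V x p1 i = lap_sc d wd h (LF \<union> LS) V x p2 i"
      using p1 p2 i unfolding PR_def by simp
    then have "(\<Sum>j\<in>(LF \<union> LS)-{i}. ZZ i j * (p1 i - p1 j)) - (\<Sum>j\<in>(LF \<union> LS)-{i}. ZZ i j * (p2 i - p2 j)) = 0"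
      unfolding lapsc_Z by simp
    then show "(\<Sum>j\<in>(LF \<union> LS)-{i}. ZZ i j * (q i - q j)) = 0"
      unfolding q_def sum_subtractf[symmetric] by (simp add: algebra_simps)
  qed
  have "\<forall>i\<in>LF. q i = 0" by (rule pres_zero[OF z eq])
  moreover have "j \<notin> LF \<Longrightarrow> q j = 0" using p1 p2 unfolding PR_def q_def by (cases "j \<in> LS") auto
  ultimately show "p1 j = p2 j" unfolding q_def by (cases "j \<in> LF") auto
qed

lemma PR_ex: "\<exists>p. PR ut p"
proof -
  let ?P = "LF \<union> LS"
  have Ffin: "finite LF" using P_sub finite_subset by blast
  have Pfin: "finite ?P" using P_sub finite_subset by blast
  have LFP: "LF \<subseteq> ?P" by blast
  define B where "B i j = (if j = i then (\<Sum>l\<in>?P-{i}. ZZ i l) else - ZZ i j)" for i j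
  have Beq: "(\<Sum>j\<in>LF. B i j * v j) = (\<Sum>j\<in>?P-{i}. ZZ i j * (v i - v j))"
    if i: "i \<in> LF" and z: "\<forall>j\<in>?P - LF. v j = 0" for i v
    unfolding B_def by (rule conv[OF Pfin LFP i z, symmetric])
  have injB: "\<forall>i\<in>LF. v i = 0" if h0: "\<forall>i\<in>LF. (\<Sum>j\<in>LF. B i j * v j) = 0" for v
  proof -
    define v' where "v' j = (if j \<in> LF then v j else 0)" for j
    have z: "\<forall>j\<in>?P - LF. v' j = 0" unfolding v'_def by simp
    have "\<forall>i\<in>LF. (\<Sum>j\<in>?P-{i}. ZZ i j * (v' i - v' j)) = 0"
    proof
      fix i assume i: "i \<in> LF"
      have "(\<Sum>j\<in>LF. B i j * v' j) = (\<Sum>j\<in>LF. B i j * v j)" unfolding v'_def by (rule sum.cong) auto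
      then show "(\<Sum>j\<in>?P-{i}. ZZ i j * (v' i - v' j)) = 0" using Beq[OF i z] h0 i by simp
    qed
    then have "\<forall>i\<in>LF. v' i = 0" by (rule pres_zero[OF z])
    then show ?thesis unfolding v'_def by simp
  qed
  have "\<exists>v. \<forall>i\<in>LF. (\<Sum>j\<in>LF. B i j * v j) = - ((rho / dt) * div_vec d wd h N V x ut i)"
    by (rule fin_lin_solve[OF Ffin, of B]) (rule injB)
  then obtain v where v: "\<And>i. i \<in> LF \<Longrightarrow> (\<Sum>j\<in>LF. B i j * v j) = - ((rho / dt) * div_vec d wd h N V x ut i)"
    by blast
  define p where "p j = (if j \<in> LF then v j else 0)" for j
  have z: "\<forall>j\<in>?P - LF. p j = 0" unfolding p_def by simp
  show ?thesis
  proof (intro exI)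
    show "PR ut p" unfolding PR_def
    proof (intro conjI allI impI ballI)
      fix i assume "i \<notin> ?P" then show "p i = 0" unfolding p_def by simp
    next
      fix i assume "i \<in> LS" then show "p i = 0" using part unfolding p_def by auto
    next
      fix i assume i: "i \<in> LF"
      have "(\<Sum>j\<in>LF. B i j * p j) = (\<Sum>j\<in>LF. B i j * v j)" unfolding p_def by (rule sum.cong) auto
      then show "lap_sc d wd h ?P V x p i = (rho / dt) * div_vec d wd h N V x ut i"
        unfolding lapsc_Z using Beq[OF i z] v[OF i] by simp
    qed
  qed
qed

lemma PR1: "\<exists>!p. PR ut p" using PR_ex PR_unique by blast

lemma UU1: "\<exists>!u. UU ut p u"
proof
  let ?G = "\<lambda>i. (1 / rho) *\<^sub>R grad_sc d wd h (LF \<union> LS) V x p i"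
  define w where "w i = (if i \<in> LF \<union> LS then ut i - dt *\<^sub>R ?G i else 0)" for i
  have sc: "\<And>E. (1/dt) *\<^sub>R (dt *\<^sub>R E) = (E::'a)" using dt by simp
  show "UU ut p w" unfolding UU_def
  proof (intro conjI allI impI ballI)
    fix i assume "i \<notin> {1..N}" then show "w i = 0" using P_sub unfolding w_def by auto
  next
    fix i assume "i \<in> LW" then show "w i = 0" using LW_disj unfolding w_def by auto
  next
    fix i assume i: "i \<in> LF \<union> LS"
    then have "w i - ut i = dt *\<^sub>R (- ?G i)" unfolding w_def by (simp only: if_True) simp
    then show "(1 / dt) *\<^sub>R (w i - ut i) = - ?G i" using sc[of "- ?G i"] by simp
  qed
  fix u assume u: "UU ut p u"
  show "u = w"
  proof
    fix i show "u i = w i"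
    proof (cases "i \<in> LF \<union> LS")
      case True
      have a: "(1 / dt) *\<^sub>R (u i - ut i) = - ?G i" using u True unfolding UU_def by simp
      have "u i - ut i = dt *\<^sub>R ((1 / dt) *\<^sub>R (u i - ut i))" using dt by simp
      then have "u i - ut i = dt *\<^sub>R (- ?G i)" using a by simp
      then show ?thesis using True unfolding w_def by (simp add: algebra_simps)
    next
      case False
      then have "i \<notin> {1..N} \<or> i \<in> LW" using part by blast
      then show ?thesis using u False unfolding UU_def w_def by auto
    qed
  qed
qed

lemma step_unique: "\<exists>!(ut, p, u). isph_step impl d wd h rho nu dt N V x LF LS LW fk uk ut p u"
proof -
  have "\<exists>!(ut, p, u). VEL impl ut \<and> PR ut p \<and> UU ut p u"
  proof (rule ex1_triple)
    show "\<exists>!ut. VEL impl ut" using VEL_impl VEL_semi by (cases impl) auto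
    show "\<And>ut. VEL impl ut \<Longrightarrow> \<exists>!p. PR ut p" using PR1 by blast
    show "\<And>ut p. VEL impl ut \<Longrightarrow> PR ut p \<Longrightarrow> \<exists>!u. UU ut p u" using UU1 by blast
  qed
  then show ?thesis unfolding step_split .
qed

end

theorem theorem1:
  fixes \<Omega> :: "'a::euclidean_space set"
    and rho nu T dt h r0 :: real and K N :: nat
    and w wd :: "real \<Rightarrow> real"
    and f :: "'a \<Rightarrow> real \<Rightarrow> 'a" and u0 :: "'a \<Rightarrow> 'a"
    and V :: "nat \<Rightarrow> real"
    and X :: "nat \<Rightarrow> nat \<Rightarrow> 'a"
    and LF LS LW :: "nat \<Rightarrow> nat set"
  assumes dim: "DIM('a) \<in> {2, 3}"
    and dom: "open \<Omega>" "connected \<Omega>" "bounded \<Omega>" "\<Omega> \<noteq> {}"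
    and rho: "rho > 0" and nu: "nu > 0" and T: "T > 0"
    and dt: "dt > 0" and K: "K = nat \<lfloor>T / dt\<rfloor>"
    and weight: "ref_weight DIM('a) w wd r0"
    and wint: "((\<lambda>z::'a. w (norm z)) has_integral 1) UNIV"
    and h: "h > 0"
    and V: "\<forall>i\<in>{1..N}. V i > 0" "(\<Sum>i\<in>{1..N}. V i) = measure lebesgue \<Omega>"
    and pos: "\<forall>k<K. \<forall>i\<in>{1..N}. X k i \<in> closure \<Omega>"
    and distinct: "\<forall>k<K. \<forall>i\<in>{1..N}. \<forall>j\<in>{1..N}. i \<noteq> j \<longrightarrow> X k i \<noteq> X k j"
    and close: "\<forall>k<K. \<exists>i\<in>{1..N}. \<exists>j\<in>{1..N}. i \<noteq> j \<and> dist (X k i) (X k j) < r0 * h"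
    and part: "\<forall>k<K. LF k \<union> LS k \<union> LW k = {1..N} \<and> LF k \<inter> LS k = {} \<and>
                      LF k \<inter> LW k = {} \<and> LS k \<inter> LW k = {}"
    and conn: "\<forall>k<K. h_connected r0 h N (X k) (LF k) (LS k) (LW k)"
  shows "\<forall>k<K. \<forall>uk :: nat \<Rightarrow> 'a.
           (\<exists>!(ut, p, u). isph_step True DIM('a) wd h rho nu dt N V (X k) (LF k) (LS k) (LW k)
                (\<lambda>i. f (X k i) (real k * dt)) uk ut p u) \<and>
           (\<exists>!(ut, p, u). isph_step False DIM('a) wd h rho nu dt N V (X k) (LF k) (LS k) (LW k)
                (\<lambda>i. f (X k i) (real k * dt)) uk ut p u)"
  proof (intro allI impI conjI)
  fix k uk assume k: "k < K"
  from weight have r0: "r0 > 0" and wdlt: "\<forall>s. 0 < s \<and> s < r0 \<longrightarrow> wd s < 0"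
    and wd0: "wd 0 = 0" and wdr0: "\<forall>s. s \<ge> r0 \<longrightarrow> wd s = 0"
    unfolding ref_weight_def by auto
  have wdle: "\<forall>s\<ge>0. wd s \<le> 0"
  proof (intro allI impI)
    fix s :: real assume s: "s \<ge> 0"
    show "wd s \<le> 0"
    proof (cases "s = 0")
      case True then show ?thesis using wd0 by simp
    next
      case False
      show ?thesis
      proof (cases "s < r0")
        case True then show ?thesis using wdlt s False by (metis less_eq_real_def)
      next
        case False then show ?thesis using wdr0 by simp
      qed
    qed
  qed
  have pk: "LF k \<union> LS k \<union> LW k = {1..N}" "LF k \<inter> LS k = {}" "LF k \<inter> LW k = {}" "LS k \<inter> LW k = {}"
    using part k by auto
  have ck: "h_connected r0 h N (X k) (LF k) (LS k) (LW k)" using conn k by auto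
  show "\<exists>!(ut, p, u). isph_step True DIM('a) wd h rho nu dt N V (X k) (LF k) (LS k) (LW k)
                (\<lambda>i. f (X k i) (real k * dt)) uk ut p u"
    by (rule step_unique[OF wdle wdlt h rho nu dt V(1) pk ck])
  show "\<exists>!(ut, p, u). isph_step False DIM('a) wd h rho nu dt N V (X k) (LF k) (LS k) (LW k)
                (\<lambda>i. f (X k i) (real k * dt)) uk ut p u"
    by (rule step_unique[OF wdle wdlt h rho nu dt V(1) pk ck])
qed

end
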